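(* Let $k\ge 2$, let $d:\chi^2\to[0,\infty)$ be a metric on a set $\chi$, and define $d_{\mathrm{HC}}:\chi^k\to[0,\infty)$ by $$d_{\mathrm{HC}}(p_1,\ldots,p_k)=\min_{\pi}\sum_{i=1}^{k} d\big(p_{\pi(i)},p_{\pi(i+1)}\big),$$ where the minimum is over all permutations $\pi$ of $\{1,\ldots,k\}$ and $\pi(k+1):=\pi(1)$ (i.e. the minimum cost of a Hamiltonian circuit through $p_1,\ldots,p_k$). Then $d_{\mathrm{HC}}$ is an $H$-metric with parameter $\gamma=1$.
   Context: For a multiset $S$ of elements of $\chi$, $elem(S)$ denotes the set of distinct elements of $S$. An $H$-metric with parameter $\gamma$ (where $\gamma$ is an integer with $1\le\gamma\le k-1$) is a function $d_H:\chi^k\to[0,\infty)$ satisfying: ($\Pi$) $d_H(p_1,\ldots,p_k)$ is invariant under permuting its arguments; ($O_D$) $d_H(p_1,\ldots,p_k)\ge 0$, with equality if and only if $p_1=\cdots=p_k$; ($\Delta_H$) for all $p_1,\ldots,p_k,a\in\chi$ and all $i\in\{1,\ldots,k\}$, $d_H(p_1,\ldots,p_k)\le d_H(p_1,\ldots,p_i,a,\ldots,a)+d_H(a,\ldots,a,p_{i+1},\ldots,p_k)$, where $a$ appears $k-i$ times in the first term and $i$ times in the second; ($\mathcal S_H$) for all $p_1,\ldots,p_k,p'_1,\ldots,p'_k\in\chi$: if $elem(\{p_1,\ldots,p_k\})\subsetneq elem(\{p'_1,\ldots,p'_k\})$ then $d_H(p_1,\ldots,p_k)\le d_H(p'_1,\ldots,p'_k)$,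 and if $elem(\{p_1,\ldots,p_k\})= elem(\{p'_1,\ldots,p'_k\})$ then $d_H(p_1,\ldots,p_k)\le \gamma\, d_H(p'_1,\ldots,p'_k)$. *)

theory Defs
  imports Complex_Main "HOL-Library.Multiset" "HOL-Combinatorics.Permutations"
begin

text \<open>Points of chi^k are represented as lists of length k over the type 'a (the set chi).
  Index i of the paper corresponds to list position i-1.\<close>

definition is_metric :: "('a \<Rightarrow> 'a \<Rightarrow> real) \<Rightarrow> bool" where
  "is_metric d \<longleftrightarrow>
     (\<forall>x y. d x y \<ge> 0) \<and> (\<forall>x y. d x y = 0 \<longleftrightarrow> x = y) \<and>
     (\<forall>x y. d x y = d y x) \<and> (\<forall>x y z. d x z \<le> d x y + d y z)"

definition H_metric :: "nat \<Rightarrow> nat \<Rightarrow> ('a list \<Rightarrow> real) \<Rightarrow> bool" where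
  "H_metric k \<gamma> dH \<longleftrightarrow>
     1 \<le> \<gamma> \<and> \<gamma> \<le> k - 1 \<and>
     \<comment> \<open>(Pi) permutation invariance\<close>
     (\<forall>ps qs. length ps = k \<longrightarrow> mset qs = mset ps \<longrightarrow> dH ps = dH qs) \<and>
     \<comment> \<open>(O_D) nonnegativity and zero exactly on constant tuples\<close>
     (\<forall>ps. length ps = k \<longrightarrow>
        dH ps \<ge> 0 \<and> (dH ps = 0 \<longleftrightarrow> (\<forall>x\<in>set ps. \<forall>y\<in>set ps. x = y))) \<and>
     \<comment> \<open>(Delta_H) H-triangle inequality\<close>
     (\<forall>ps a i. length ps = k \<longrightarrow> 1 \<le> i \<longrightarrow> i \<le> k \<longrightarrow>
        dH ps \<le> dH (take i ps @ replicate (k - i) a) + dH (replicate i a @ drop i ps)) \<and>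
     \<comment> \<open>(S_H) monotonicity\<close>
     (\<forall>ps qs. length ps = k \<longrightarrow> length qs = k \<longrightarrow>
        (set ps \<subset> set qs \<longrightarrow> dH ps \<le> dH qs) \<and>
        (set ps = set qs \<longrightarrow> dH ps \<le> real \<gamma> * dH qs))"

definition dHC :: "('a \<Rightarrow> 'a \<Rightarrow> real) \<Rightarrow> nat \<Rightarrow> 'a list \<Rightarrow> real" where
  "dHC d k ps = Min {(\<Sum>i<k. d (ps ! \<pi> i) (ps ! \<pi> ((i + 1) mod k))) | \<pi>. \<pi> permutes {..<k}}"

end

theory Submission
  imports Defs
begin

fun path :: "('a \<Rightarrow> 'a \<Rightarrow> real) \<Rightarrow> 'a list \<Rightarrow> real" where
  "path d [] = 0" | "path d [x] = 0" | "path d (x#y#xs) = d x y + path d (y#xs)"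

definition cyc :: "('a \<Rightarrow> 'a \<Rightarrow> real) \<Rightarrow> 'a list \<Rightarrow> real" where
  "cyc d xs = (case xs of [] \<Rightarrow> 0 | x#_ \<Rightarrow> path d (xs @ [x]))"

lemma path_append: "path d (xs @ y # ys) = path d (xs @ [y]) + path d (y # ys)"
proof (induction xs)
  case Nil then show ?case by simp
next
  case (Cons x xs) then show ?case by (cases xs) auto
qed

lemma path_snoc: "zs \<noteq> [] \<Longrightarrow> path d (zs @ [y]) = path d zs + d (last zs) y"
proof (induction zs)
  case Nil then show ?case by simp
next
  case (Cons x xs) then show ?case by (cases xs) auto
qed

lemma path_sum: "path d ys = (\<Sum>i < length ys - 1. d (ys!i) (ys!Suc i))"
proof (induction d ys rule: path.induct)
  case (3 d x y xs)
  then show ?case by (simp add: sum.lessThan_Suc_shift del: sum.lessThan_Suc)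
qed auto

lemma path_nonneg: "is_metric d \<Longrightarrow> path d ys \<ge> 0"
  by (induction d ys rule: path.induct) (auto simp: is_metric_def add_nonneg_nonneg)

lemma cyc_nonneg: "is_metric d \<Longrightarrow> cyc d xs \<ge> 0"
  by (auto simp: cyc_def path_nonneg split: list.split)

lemma cyc_sum:
  assumes "xs \<noteq> []"
  shows "(\<Sum>i<length xs. d (xs!i) (xs!((i+1) mod length xs))) = cyc d xs"
proof -
  obtain x xs' where xs: "xs = x # xs'" using assms by (cases xs) auto
  have "cyc d xs = (\<Sum>i < length xs. d ((xs@[x])!i) ((xs@[x])!Suc i))"
    by (simp add: cyc_def xs path_sum)
  also have "\<dots> = (\<Sum>i<length xs. d (xs!i) (xs!((i+1) mod length xs)))"
  proof (rule sum.cong)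
    fix i assume "i \<in> {..<length xs}"
    then have i: "i < length xs" by simp
    have 1: "(xs@[x])!i = xs!i" using i by (simp add: nth_append)
    have 2: "(xs@[x])!Suc i = xs!((i+1) mod length xs)"
    proof (cases "Suc i < length xs")
      case True then show ?thesis by (simp add: nth_append)
    next
      case False then have "Suc i = length xs" using i by simp
      then show ?thesis by (simp add: nth_append xs)
    qed
    show "d ((xs@[x])!i) ((xs@[x])!Suc i) = d (xs!i) (xs!((i+1) mod length xs))"
      using 1 2 by simp
  qed simp
  finally show ?thesis by simp
qed

lemma cyc_rotate: "cyc d (xs @ ys) = cyc d (ys @ xs)"
proof (cases "xs = [] \<or> ys = []")
  case True then show ?thesis by auto
next
  case False
  then obtain x xs' y ys' where "xs = x#xs'" "ys = y#ys'" by (meson list.exhaust)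
  then show ?thesis
    using path_append[of d "x#xs'" y "ys'@[x]"] path_append[of d "y#ys'" x "xs'@[y]"]
    by (simp add: cyc_def)
qed

lemma cyc_merge: "cyc d (a # u @ a # v) = cyc d (a # u) + cyc d (a # v)"
  using path_append[of d "a#u" a "v@[a]"] by (simp add: cyc_def)

lemma cyc_dup: "is_metric d \<Longrightarrow> cyc d (y # y # w) = cyc d (y # w)"
  by (simp add: cyc_def is_metric_def)

lemma cyc_drop_hd:
  assumes "is_metric d" shows "cyc d ys \<le> cyc d (x # ys)"
proof (cases ys)
  case Nil then show ?thesis using assms by (simp add: cyc_def is_metric_def)
next
  case (Cons y ys')
  have tri: "d (last (y#ys')) y \<le> d (last (y#ys')) x + d x y"
    using assms unfolding is_metric_def by blast
  show ?thesis using Cons path_snoc[of "y#ys'" d y] path_snoc[of "y#ys'" d x] tri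
    by (simp add: cyc_def)
qed

lemma cyc_remove:
  assumes "is_metric d" shows "cyc d (u @ v) \<le> cyc d (u @ x # v)"
proof -
  have "cyc d (u @ v) = cyc d (v @ u)" by (rule cyc_rotate)
  also have "\<dots> \<le> cyc d (x # v @ u)" by (rule cyc_drop_hd[OF assms])
  also have "\<dots> = cyc d (u @ x # v)" using cyc_rotate[of d u "x # v"] by simp
  finally show ?thesis .
qed


definition C :: "('a \<Rightarrow> 'a \<Rightarrow> real) \<Rightarrow> 'a multiset \<Rightarrow> real" where
  "C d M = Min (cyc d ` {xs. mset xs = M})"

lemma finite_mset_lists: "finite {xs. mset xs = M}"
proof (rule finite_subset)
  show "{xs. mset xs = M} \<subseteq> {xs. set xs \<subseteq> set_mset M \<and> length xs = size M}" by auto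
  show "finite {xs. set xs \<subseteq> set_mset M \<and> length xs = size M}"
    by (rule finite_lists_length_eq) simp
qed

lemma C_le: "mset xs = M \<Longrightarrow> C d M \<le> cyc d xs"
  unfolding C_def by (rule Min_le) (auto intro: finite_mset_lists)

lemma C_attained: "\<exists>xs. mset xs = M \<and> cyc d xs = C d M"
proof -
  obtain ys where "mset ys = M" using ex_mset by blast
  then have ne: "cyc d ` {xs. mset xs = M} \<noteq> {}" by auto
  have "C d M \<in> cyc d ` {xs. mset xs = M}"
    unfolding C_def by (rule Min_in) (use ne finite_mset_lists in auto)
  then show ?thesis by auto
qed

lemma reduce:
  assumes "is_metric d"
  shows "M \<subseteq># mset zs \<Longrightarrow> \<exists>ws. mset ws = M \<and> cyc d ws \<le> cyc d zs"
proof (induction "length zs" arbitrary: zs rule: less_induct)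
  case less
  show ?case
  proof (cases "M = mset zs")
    case True then show ?thesis by auto
  next
    case False
    then obtain z where z: "count M z < count (mset zs) z"
      using less.prems by (metis mset_subset_eq_count nat_less_le multiset_eqI)
    then have "z \<in> set zs" by (metis count_eq_zero_iff gr_implies_not0 set_mset_mset)
    then obtain u v where uv: "zs = u @ z # v" by (meson split_list)
    have "M \<subseteq># mset (u @ v)"
      unfolding subseteq_mset_def
    proof
      fix a show "count M a \<le> count (mset (u @ v)) a"
      proof -
        have h: "count M a \<le> count (mset zs) a" using less.prems by (simp add: subseteq_mset_def)
        have e: "count (mset zs) a = count (mset (u @ v)) a + (if a = z then 1 else 0)"
          using uv by simp
        show ?thesis using h e z by (cases "a = z") auto
      qed
    qed
    moreover have "length (u @ v) < length zs" using uv by simp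
    ultimately obtain ws where "mset ws = M" "cyc d ws \<le> cyc d (u @ v)"
      using less.hyps by blast
    then show ?thesis using cyc_remove[OF assms, of u v z] uv by force
  qed
qed

lemma C_le_super: "is_metric d \<Longrightarrow> M \<subseteq># mset zs \<Longrightarrow> C d M \<le> cyc d zs"
  using reduce C_le by (metis order_trans)

lemma expand:
  assumes "is_metric d" "xs \<noteq> []"
  shows "set_mset M \<subseteq> set xs \<Longrightarrow> \<exists>zs. mset zs = mset xs + M \<and> cyc d zs = cyc d xs"
proof (induction M)
  case empty then show ?case by auto
next
  case (add y M)
  then obtain zs where zs: "mset zs = mset xs + M" "cyc d zs = cyc d xs" by auto
  have "y \<in> set xs" using add.prems by auto
  then have "y \<in> set zs" using zs(1) by (metis mset_subset_eq_add_left mset_subset_eqD set_mset_mset)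
  then obtain u v where uv: "zs = u @ y # v" by (meson split_list)
  have "cyc d (u @ y # y # v) = cyc d (y # y # v @ u)" using cyc_rotate[of d u "y#y#v"] by simp
  also have "\<dots> = cyc d (y # v @ u)" by (rule cyc_dup[OF assms(1)])
  also have "\<dots> = cyc d zs" using cyc_rotate[of d u "y#v"] uv by simp
  finally show ?case using zs uv by (intro exI[of _ "u @ y # y # v"]) auto
qed

lemma dHC_C:
  assumes "length ps = k" "k \<ge> 1"
  shows "dHC d k ps = C d (mset ps)"
proof -
  have "{(\<Sum>i<k. d (ps ! \<pi> i) (ps ! \<pi> ((i + 1) mod k))) | \<pi>. \<pi> permutes {..<k}}
        = cyc d ` {xs. mset xs = mset ps}"
  proof (intro equalityI subsetI)
    fix t assume "t \<in> {(\<Sum>i<k. d (ps ! \<pi> i) (ps ! \<pi> ((i + 1) mod k))) | \<pi>. \<pi> permutes {..<k}}"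
    then obtain \<pi> where p: "\<pi> permutes {..<k}" and t: "t = (\<Sum>i<k. d (ps ! \<pi> i) (ps ! \<pi> ((i + 1) mod k)))"
      by auto
    let ?xs = "permute_list \<pi> ps"
    have l: "length ?xs = k" using assms by simp
    have "t = (\<Sum>i<length ?xs. d (?xs!i) (?xs!((i+1) mod length ?xs)))"
      unfolding t l using assms by (intro sum.cong) (auto simp: permute_list_def)
    also have "\<dots> = cyc d ?xs" using l assms by (intro cyc_sum) (metis le_zero_eq list.size(3) not_one_le_zero)
    finally show "t \<in> cyc d ` {xs. mset xs = mset ps}"
      using p assms by (auto intro!: mset_permute_list)
  next
    fix t assume "t \<in> cyc d ` {xs. mset xs = mset ps}"
    then obtain xs where xs: "mset xs = mset ps" "t = cyc d xs" by auto
    obtain \<pi> where p: "\<pi> permutes {..<length ps}" "permute_list \<pi> ps = xs"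
      using mset_eq_permutation[OF xs(1)] by blast
    have l: "length xs = k" using xs(1) assms by (metis size_mset)
    have "t = (\<Sum>i<length xs. d (xs!i) (xs!((i+1) mod length xs)))"
    proof -
      have "xs \<noteq> []" using l assms by auto
      then show ?thesis using xs(2) cyc_sum[of xs d] by simp
    qed
    also have "\<dots> = (\<Sum>i<k. d (ps ! \<pi> i) (ps ! \<pi> ((i + 1) mod k)))"
      unfolding l using assms p(2)[symmetric] by (intro sum.cong) (auto simp: permute_list_def)
    finally show "t \<in> {(\<Sum>i<k. d (ps ! \<pi> i) (ps ! \<pi> ((i + 1) mod k))) | \<pi>. \<pi> permutes {..<k}}"
      using p assms by auto
  qed
  then show ?thesis unfolding dHC_def C_def by simp
qed


lemma C_nonneg: "is_metric d \<Longrightarrow> C d M \<ge> 0"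
  using C_attained[of M d] cyc_nonneg by metis

lemma path_zero: "is_metric d \<Longrightarrow> path d ys = 0 \<Longrightarrow> \<forall>y\<in>set ys. y = hd ys"
proof (induction d ys rule: path.induct)
  case (3 d x y xs)
  have "d x y \<ge> 0" "path d (y#xs) \<ge> 0" using 3(2) path_nonneg by (auto simp: is_metric_def)
  then have "d x y = 0" "path d (y#xs) = 0" using 3(3) by auto
  then have "x = y" using 3(2) by (simp add: is_metric_def)
  with 3 \<open>path d (y#xs) = 0\<close> show ?case by auto
qed auto

lemma path_const: "is_metric d \<Longrightarrow> \<forall>y\<in>set ys. y = c \<Longrightarrow> path d ys = 0"
  by (induction d ys rule: path.induct) (auto simp: is_metric_def)

lemma cyc_zero_iff: "is_metric d \<Longrightarrow> cyc d xs = 0 \<longleftrightarrow> (\<forall>a\<in>set xs. \<forall>b\<in>set xs. a = b)"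
proof (cases xs)
  case Nil then show ?thesis by (simp add: cyc_def)
next
  case (Cons x xs')
  assume m: "is_metric d"
  show ?thesis
  proof
    assume "cyc d xs = 0"
    then have "path d (x # xs' @ [x]) = 0" using Cons by (simp add: cyc_def)
    from path_zero[OF m this] have "\<forall>y\<in>set xs. y = x" using Cons by simp
    then show "\<forall>a\<in>set xs. \<forall>b\<in>set xs. a = b" by (intro ballI) (metis)
  next
    assume "\<forall>a\<in>set xs. \<forall>b\<in>set xs. a = b"
    then have "\<forall>y\<in>set (x # xs' @ [x]). y = x" using Cons by auto
    from path_const[OF m this] show "cyc d xs = 0" using Cons by (simp add: cyc_def)
  qed
qed

lemma C_mono:
  assumes m: "is_metric d" and "set ps \<subseteq> set qs" "qs \<noteq> []"
  shows "C d (mset ps) \<le> C d (mset qs)"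
proof -
  obtain xs where xs: "mset xs = mset qs" "cyc d xs = C d (mset qs)" using C_attained by blast
  have "xs \<noteq> []" using xs(1) assms(3) by auto
  moreover have "set_mset (mset ps) \<subseteq> set xs" using assms(2) xs(1) by (metis set_mset_mset)
  ultimately obtain zs where zs: "mset zs = mset xs + mset ps" "cyc d zs = cyc d xs"
    using expand[OF m] by blast
  have "mset ps \<subseteq># mset zs" using zs(1) by simp
  then have "C d (mset ps) \<le> cyc d zs" by (rule C_le_super[OF m])
  then show ?thesis using zs xs by simp
qed

lemma rot_to_front:
  assumes "a \<in> set xs" shows "\<exists>ys. mset (a # ys) = mset xs \<and> cyc d (a # ys) = cyc d xs"
proof -
  obtain u v where "xs = u @ a # v" using assms by (meson split_list)
  then show ?thesis using cyc_rotate[of d u "a#v"] by (intro exI[of _ "v @ u"]) auto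
qed

lemma C_delta:
  assumes m: "is_metric d" and "a \<in># A" "a \<in># B" "M \<subseteq># A + B"
  shows "C d M \<le> C d A + C d B"
proof -
  obtain xs where xs: "mset xs = A" "cyc d xs = C d A" using C_attained by blast
  obtain ys where ys: "mset ys = B" "cyc d ys = C d B" using C_attained by blast
  obtain xs' where xs': "mset (a # xs') = mset xs" "cyc d (a # xs') = cyc d xs"
    using rot_to_front[of a xs d] assms(2) xs(1) by (metis set_mset_mset)
  obtain ys' where ys': "mset (a # ys') = mset ys" "cyc d (a # ys') = cyc d ys"
    using rot_to_front[of a ys d] assms(3) ys(1) by (metis set_mset_mset)
  have "mset (a # xs' @ a # ys') = A + B" using xs' ys' xs ys by simp
  then have "C d M \<le> cyc d (a # xs' @ a # ys')" using C_le_super[OF m] assms(4) by metis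
  also have "\<dots> = C d A + C d B" using cyc_merge[of d a xs' ys'] xs'(2) ys'(2) xs(2) ys(2) by simp
  finally show ?thesis .
qed

theorem proposition2:
  fixes d :: "'a \<Rightarrow> 'a \<Rightarrow> real" and k :: nat
  assumes "k \<ge> 2" and "is_metric d"
  shows "H_metric k 1 (dHC d k)"
proof -
  note m = assms(2)
  have k1: "k \<ge> 1" using assms(1) by simp
  have eq: "\<And>ps. length ps = k \<Longrightarrow> dHC d k ps = C d (mset ps)" using dHC_C k1 by blast
  have P1: "\<forall>ps qs. length ps = k \<longrightarrow> mset qs = mset ps \<longrightarrow> dHC d k ps = dHC d k qs"
  proof (intro allI impI)
    fix ps qs :: "'a list" assume l: "length ps = k" and e: "mset qs = mset ps"
    have "length qs = k" using l e by (metis size_mset)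
    then show "dHC d k ps = dHC d k qs" using eq l e by simp
  qed
  have P2: "\<forall>ps. length ps = k \<longrightarrow> dHC d k ps \<ge> 0 \<and>
        (dHC d k ps = 0 \<longleftrightarrow> (\<forall>x\<in>set ps. \<forall>y\<in>set ps. x = y))"
  proof (intro allI impI conjI)
    fix ps :: "'a list" assume l: "length ps = k"
    show "dHC d k ps \<ge> 0" using eq[OF l] C_nonneg[OF m] by simp
    show "dHC d k ps = 0 \<longleftrightarrow> (\<forall>x\<in>set ps. \<forall>y\<in>set ps. x = y)"
    proof
      assume "dHC d k ps = 0"
      then obtain xs where "mset xs = mset ps" "cyc d xs = 0"
        using C_attained eq[OF l] by metis
      then show "\<forall>x\<in>set ps. \<forall>y\<in>set ps. x = y" using cyc_zero_iff[OF m] by (metis set_mset_mset)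
    next
      assume "\<forall>x\<in>set ps. \<forall>y\<in>set ps. x = y"
      then have "cyc d ps = 0" using cyc_zero_iff[OF m] by blast
      then have "dHC d k ps \<le> 0" using eq[OF l] C_le[of ps "mset ps" d] by simp
      then show "dHC d k ps = 0" using eq[OF l] C_nonneg[OF m, of "mset ps"] by linarith
    qed
  qed
  have P3: "\<forall>ps a i. length ps = k \<longrightarrow> 1 \<le> i \<longrightarrow> i \<le> k \<longrightarrow>
        dHC d k ps \<le> dHC d k (take i ps @ replicate (k - i) a) + dHC d k (replicate i a @ drop i ps)"
  proof (intro allI impI)
    fix ps :: "'a list" and a i assume l: "length ps = k" and i: "1 \<le> i" "i \<le> k"
    let ?A = "take i ps @ replicate (k - i) a" and ?B = "replicate i a @ drop i ps"
    have lA: "length ?A = k" and lB: "length ?B = k" using l i by auto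
    have B0: "dHC d k ?B \<ge> 0" using eq[OF lB] C_nonneg[OF m] by simp
    show "dHC d k ps \<le> dHC d k ?A + dHC d k ?B"
    proof (cases "i = k")
      case True
      then have "?A = ps" using l by simp
      then show ?thesis using B0 by simp
    next
      case False
      have aA: "a \<in># mset ?A" using False i by simp
      have aB: "a \<in># mset ?B" using i by simp
      have "mset ps = mset (take i ps) + mset (drop i ps)"
        by (metis append_take_drop_id mset_append)
      then have "mset ps \<subseteq># mset ?A + mset ?B" by (simp add: subset_mset.add_mono)
      from C_delta[OF m aA aB this] show ?thesis using eq l lA lB by simp
    qed
  qed
  have P4: "\<forall>ps qs. length ps = k \<longrightarrow> length qs = k \<longrightarrow>
        (set ps \<subset> set qs \<longrightarrow> dHC d k ps \<le> dHC d k qs) \<and>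
        (set ps = set qs \<longrightarrow> dHC d k ps \<le> real 1 * dHC d k qs)"
  proof (intro allI impI conjI)
    fix ps qs :: "'a list" assume l: "length ps = k" "length qs = k"
    have ne: "qs \<noteq> []" using l k1 by auto
    show "set ps \<subset> set qs \<Longrightarrow> dHC d k ps \<le> dHC d k qs"
      using C_mono[OF m _ ne, of ps] eq l by auto
    show "set ps = set qs \<Longrightarrow> dHC d k ps \<le> real 1 * dHC d k qs"
      using C_mono[OF m _ ne, of ps] eq l by auto
  qed
  have k2: "1 \<le> k - 1" using assms(1) by simp
  show ?thesis unfolding H_metric_def
    by (intro conjI order.refl k2 P1 P2 P3 P4)
qed

end
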